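(* Let $p$ be a positive integer, $L,E,\sigma>0$ with $L,E\in 2^{-p}\mathbb{Z}$, and $x\in\mathcal{A}_{p,E}$. If $y$ is drawn with probability mass function $f^{(\mathtt{CLap})}_{x,\sigma}$ on $\mathcal{B}_{p,L+E}$, then \[ \mathbb{E}(y)=x\cdot\frac{\sigma(1-e^{-L/\sigma})-e^{-L/\sigma}L}{\sigma(1-e^{-L/\sigma})+e^{-L/\sigma}E}-\frac{2^{-p}}{2}. \]
   Context: For $p\in\mathbb{Z}_{>0}$ and $B>0$, $2^{-p}\mathbb{Z}=\{a/2^p: a\in\mathbb{Z}\}$, $\mathcal{A}_{p,B}:=[-B,B]\cap 2^{-p}\mathbb{Z}$ and $\mathcal{B}_{p,B}:=\mathcal{A}_{p,B}\setminus\{B\}$. The truncated cumulative Laplace mechanism with parameters $L,E,\sigma>0$ maps $x\in\mathcal{A}_{p,E}$ to $y\in\mathcal{B}_{p,L+E}$ with probability $f^{(\mathtt{CLap})}_{x,\sigma}(y)=\frac{1}{\lambda^{(\mathtt{CLap})}_{L,E,\sigma}}\int_y^{y+2^{-p}}e^{-\min(|r-x|,L)/\sigma}dr$, where $\lambda^{(\mathtt{CLap})}_{L,E,\sigma}=\sum_{y\in\mathcal{B}_{p,L+E}}\int_y^{y+2^{-p}}e^{-\min(|r-x|,L)/\sigma}dr$ is the normalizing constant. *)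

theory Defs
  imports "HOL-Analysis.Analysis"
begin

definition dyadic :: "nat \<Rightarrow> real \<Rightarrow> bool" where
  "dyadic p r \<longleftrightarrow> (\<exists>a::int. r = real_of_int a / 2 ^ p)"

definition gridA :: "nat \<Rightarrow> real \<Rightarrow> real set" where
  "gridA p B = {r. dyadic p r \<and> -B \<le> r \<and> r \<le> B}"

definition gridB :: "nat \<Rightarrow> real \<Rightarrow> real set" where
  "gridB p B = gridA p B - {B}"

definition clap_weight :: "nat \<Rightarrow> real \<Rightarrow> real \<Rightarrow> real \<Rightarrow> real \<Rightarrow> real" where
  "clap_weight p L \<sigma> x y =
     integral {y..y + 1 / 2 ^ p} (\<lambda>r. exp (- min \<bar>r - x\<bar> L / \<sigma>))"

definition clap_norm :: "nat \<Rightarrow> real \<Rightarrow> real \<Rightarrow> real \<Rightarrow> real \<Rightarrow> real" where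
  "clap_norm p L E \<sigma> x = (\<Sum>y\<in>gridB p (L + E). clap_weight p L \<sigma> x y)"

definition clap_pmf :: "nat \<Rightarrow> real \<Rightarrow> real \<Rightarrow> real \<Rightarrow> real \<Rightarrow> real \<Rightarrow> real" where
  "clap_pmf p L E \<sigma> x y = clap_weight p L \<sigma> x y / clap_norm p L E \<sigma> x"

end

theory Submission imports Defs begin
lemma cells_sum:
  fixes f :: "real \<Rightarrow> real" and h :: real and a b :: int
  assumes cont: "continuous_on UNIV f" and h: "h > 0" and ab: "a \<le> b"
  shows "(\<Sum>k\<in>{a..<b}. integral {real_of_int k * h .. real_of_int k * h + h} f)
         = integral {real_of_int a * h .. real_of_int b * h} f"
  using ab
proof (induction b rule: int_ge_induct)
  case base
  then show ?case by simp
next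
  case (step i)
  have "{a..<i+1} = insert i {a..<i}" using step by auto
  then have "(\<Sum>k\<in>{a..<i+1}. integral {real_of_int k * h .. real_of_int k * h + h} f)
     = integral {real_of_int i * h .. real_of_int i * h + h} f + integral {real_of_int a * h .. real_of_int i * h} f"
    using step by simp
  also have "\<dots> = integral {real_of_int a * h .. real_of_int i * h} f + integral {real_of_int i * h .. real_of_int (i+1) * h} f"
    by (simp add: algebra_simps)
  also have "\<dots> = integral {real_of_int a * h .. real_of_int (i+1) * h} f"
    apply (rule Henstock_Kurzweil_Integration.integral_combine)
    using step h apply (auto intro!: mult_right_mono integrable_continuous_interval continuous_on_subset[OF cont])
    done
  finally show ?case .
qed

lemma sum_k: "(\<Sum>k\<in>{- int n..<int n}. real_of_int k) = - real n"
proof (induction n)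
  case 0 then show ?case by simp
next
  case (Suc n)
  have "{- int (Suc n)..<int (Suc n)} = insert (- int (Suc n)) (insert (int n) {- int n..<int n})" by auto
  then show ?case using Suc by simp
qed

definition phi :: "real \<Rightarrow> real \<Rightarrow> real \<Rightarrow> real" where
  "phi L \<sigma> t = exp (- min \<bar>t\<bar> L / \<sigma>) - exp (- L / \<sigma>)"

lemma phi_cont: "continuous_on UNIV (phi L \<sigma>)"
  unfolding phi_def divide_inverse by (intro continuous_intros)

lemma phi_even: "phi L \<sigma> (-t) = phi L \<sigma> t"
  unfolding phi_def by simp

lemma phi_zero: "\<bar>t\<bar> \<ge> L \<Longrightarrow> phi L \<sigma> t = 0"
  unfolding phi_def by (simp add: min_def)

lemma I_refl:
  "integral {real_of_int (-1-j) * h .. real_of_int (-1-j) * h + h} (phi L \<sigma>)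
   = integral {real_of_int j * h .. real_of_int j * h + h} (phi L \<sigma>)"
proof -
  have "integral {- (real_of_int j * h + h) .. - (real_of_int j * h)} (\<lambda>t. phi L \<sigma> (-t))
      = integral {real_of_int j * h .. real_of_int j * h + h} (phi L \<sigma>)"
    by (rule Henstock_Kurzweil_Integration.integral_reflect_real)
  moreover have e1: "- (real_of_int j * h + h) = real_of_int (-1-j) * h"
    and e2: "- (real_of_int j * h) = real_of_int (-1-j) * h + h"
    by (simp_all add: algebra_simps)
  ultimately show ?thesis unfolding e1 e2 phi_even by simp
qed

lemma I_zero:
  assumes h: "h > 0" and L: "L = real_of_int M * h" and j: "j \<ge> M \<or> j < -M"
  shows "integral {real_of_int j * h .. real_of_int j * h + h} (phi L \<sigma>) = 0"
proof -
  have "\<forall>t\<in>{real_of_int j * h .. real_of_int j * h + h}. phi L \<sigma> t = 0"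
  proof
    fix t assume t: "t \<in> {real_of_int j * h .. real_of_int j * h + h}"
    show "phi L \<sigma> t = 0"
    proof (rule phi_zero)
      show "\<bar>t\<bar> \<ge> L"
      proof (cases "j \<ge> M")
        case True
        then have "real_of_int M * h \<le> real_of_int j * h" using h by (simp add: mult_right_mono)
        then show ?thesis using t L by auto
      next
        case False
        then have "j + 1 \<le> -M" using j by auto
        then have "real_of_int (j+1) * h \<le> real_of_int (-M) * h" using h
          by (intro mult_right_mono) auto
        then show ?thesis using t L by (auto simp: algebra_simps)
      qed
    qed
  qed
  then have "integral {real_of_int j * h .. real_of_int j * h + h} (phi L \<sigma>)
     = integral {real_of_int j * h .. real_of_int j * h + h} (\<lambda>_. 0::real)"
    by (intro integral_cong) simp
  then show ?thesis by simp
qed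

lemma half_int:
  assumes L: "L > 0" and s: "\<sigma> > 0"
  shows "integral {0..L} (phi L \<sigma>) = \<sigma> * (1 - exp (- L / \<sigma>)) - L * exp (- L / \<sigma>)"
proof -
  let ?c = "exp (- L / \<sigma>)"
  let ?F = "\<lambda>t. - \<sigma> * exp (- t / \<sigma>) - ?c * t"
  have "((\<lambda>t. exp (- t / \<sigma>) - ?c) has_integral (?F L - ?F 0)) {0..L}"
  proof (rule fundamental_theorem_of_calculus)
    show "0 \<le> L" using L by simp
    fix t assume "t \<in> {0..L}"
    show "(?F has_vector_derivative (exp (- t / \<sigma>) - ?c)) (at t within {0..L})"
      unfolding has_real_derivative_iff_has_vector_derivative[symmetric]
      using s by (auto intro!: derivative_eq_intros)
  qed
  moreover have "\<forall>t\<in>{0..L}. phi L \<sigma> t = exp (- t / \<sigma>) - ?c"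
    unfolding phi_def by (auto simp: min_def)
  moreover have "integral {0..L} (phi L \<sigma>) = integral {0..L} (\<lambda>t. exp (- t / \<sigma>) - ?c)"
    by (intro integral_cong) (auto simp: phi_def min_def)
  ultimately have "integral {0..L} (phi L \<sigma>) = ?F L - ?F 0"
    by (simp add: integral_unique)
  then show ?thesis using s by (simp add: algebra_simps)
qed

lemma sym_sums:
  fixes F :: "int \<Rightarrow> real"
  assumes refl: "\<And>j. F (-1-j) = F j" and zero: "\<And>j. j \<ge> M \<or> j < -M \<Longrightarrow> F j = 0"
    and AB: "A \<le> -M" "M \<le> B" and M: "M \<ge> 0"
  shows "(\<Sum>j\<in>{A..<B}. F j) = 2 * (\<Sum>j\<in>{0..<M}. F j)"
    and "(\<Sum>j\<in>{A..<B}. real_of_int j * F j) = - (\<Sum>j\<in>{0..<M}. F j)"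
proof -
  have sub: "{-M..<M} \<subseteq> {A..<B}" by (intro subsetI) (use AB in auto)
  have split: "{-M..<M} = {-M..<0} \<union> {0..<M}" using M by auto
  have img: "(\<lambda>j. -1-j) ` {0..<M} = {-M..<0}"
  proof
    show "{-M..<0} \<subseteq> (\<lambda>j. -1-j) ` {0..<M}"
    proof
      fix k assume "k \<in> {-M..<0}"
      then have "k = -1 - (-1-k)" "-1-k \<in> {0..<M}" by auto
      then show "k \<in> (\<lambda>j. -1-j) ` {0..<M}" by blast
    qed
  qed auto
  have inj: "inj_on (\<lambda>j::int. -1-j) {0..<M}" by (auto simp: inj_on_def)
  have reidx: "\<And>G. (\<Sum>j\<in>{-M..<0}. G j) = (\<Sum>j\<in>{0..<M}. G (-1-j))"
    by (simp only: img[symmetric] sum.reindex[OF inj] comp_def)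
  have z1: "\<forall>i\<in>{A..<B} - {-M..<M}. F i = 0" using zero by auto
  have z2: "\<forall>i\<in>{A..<B} - {-M..<M}. real_of_int i * F i = 0" using zero by auto
  have "(\<Sum>j\<in>{A..<B}. F j) = (\<Sum>j\<in>{-M..<M}. F j)"
    using sum.mono_neutral_right[OF _ sub z1] by simp
  also have "\<dots> = (\<Sum>j\<in>{-M..<0}. F j) + (\<Sum>j\<in>{0..<M}. F j)"
    unfolding split by (rule sum.union_disjoint) auto
  also have "\<dots> = 2 * (\<Sum>j\<in>{0..<M}. F j)" using reidx[of F] refl by simp
  finally show "(\<Sum>j\<in>{A..<B}. F j) = 2 * (\<Sum>j\<in>{0..<M}. F j)" .
  have "(\<Sum>j\<in>{A..<B}. real_of_int j * F j) = (\<Sum>j\<in>{-M..<M}. real_of_int j * F j)"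
    using sum.mono_neutral_right[OF _ sub z2] by simp
  also have "\<dots> = (\<Sum>j\<in>{-M..<0}. real_of_int j * F j) + (\<Sum>j\<in>{0..<M}. real_of_int j * F j)"
    unfolding split by (rule sum.union_disjoint) auto
  also have "\<dots> = (\<Sum>j\<in>{0..<M}. real_of_int (-1-j) * F j + real_of_int j * F j)"
    using reidx[of "\<lambda>j. real_of_int j * F j"] refl by (simp add: sum.distrib)
  also have "\<dots> = - (\<Sum>j\<in>{0..<M}. F j)"
    by (simp add: algebra_simps sum_negf)
  finally show "(\<Sum>j\<in>{A..<B}. real_of_int j * F j) = - (\<Sum>j\<in>{0..<M}. F j)" .
qed

lemma shift_sum:
  fixes H :: "int \<Rightarrow> real"
  shows "(\<Sum>k\<in>{a..<b}. H (k - m)) = (\<Sum>j\<in>{a-m..<b-m}. H j)"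
  by (rule sum.reindex_bij_witness[where i="\<lambda>j. j + m" and j="\<lambda>k. k - m"]) auto

theorem mainTheorem11:
  fixes p :: nat and L E \<sigma> x :: real
  assumes "p > 0" and "L > 0" and "E > 0" and "\<sigma> > 0"
    and "dyadic p L" and "dyadic p E"
    and "x \<in> gridA p E"
  shows "(\<Sum>y\<in>gridB p (L + E). y * clap_pmf p L E \<sigma> x y) =
    x * ((\<sigma> * (1 - exp (- L / \<sigma>)) - exp (- L / \<sigma>) * L)
         / (\<sigma> * (1 - exp (- L / \<sigma>)) + exp (- L / \<sigma>) * E))
    - (1 / 2 ^ p) / 2"
proof -
  note Lpos = assms(2) and Epos = assms(3) and spos = assms(4)
  define h :: real where "h = 1 / 2 ^ p"
  have hpos: "h > 0" unfolding h_def by simp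
  have dy: "\<And>r. dyadic p r \<Longrightarrow> \<exists>a::int. r = real_of_int a * h"
    unfolding dyadic_def h_def by (auto simp: divide_inverse)
  obtain M where M: "L = real_of_int M * h" using dy[OF assms(5)] by blast
  obtain aE where aE: "E = real_of_int aE * h" using dy[OF assms(6)] by blast
  have xA: "dyadic p x" "-E \<le> x" "x \<le> E" using assms(7) unfolding gridA_def by auto
  obtain m where m: "x = real_of_int m * h" using dy[OF xA(1)] by blast
  have Mpos: "M > 0" using Lpos M hpos by (simp add: zero_less_mult_iff)
  have aEpos: "aE > 0" using Epos aE hpos by (simp add: zero_less_mult_iff)
  have "real_of_int m * h \<le> real_of_int aE * h" using xA m aE by simp
  then have mle: "m \<le> aE" using hpos by simp
  have "real_of_int (-aE) * h \<le> real_of_int m * h" using xA m aE by simp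
  then have mge: "-aE \<le> m" using hpos by (simp only: mult_le_cancel_right_pos of_int_le_iff)
  define N where "N = M + aE"
  have LE: "L + E = real_of_int N * h" unfolding N_def M aE by (simp add: algebra_simps)
  define c where "c = exp (- L / \<sigma>)"
  define I where "I j = integral {real_of_int j * h .. real_of_int j * h + h} (phi L \<sigma>)" for j
  define S0 where "S0 = (\<Sum>j\<in>{0..<M}. I j)"
  have S0: "S0 = \<sigma> * (1 - c) - L * c"
  proof -
    have "S0 = integral {real_of_int 0 * h .. real_of_int M * h} (phi L \<sigma>)"
      unfolding S0_def I_def by (rule cells_sum[OF phi_cont hpos]) (use Mpos in simp)
    also have "\<dots> = integral {0..L} (phi L \<sigma>)" using M by simp
    finally show ?thesis using half_int[OF Lpos spos] c_def by simp
  qed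
  have grid: "gridB p (L + E) = (\<lambda>k. real_of_int k * h) ` {-N..<N}"
  proof
    show "gridB p (L + E) \<subseteq> (\<lambda>k. real_of_int k * h) ` {-N..<N}"
    proof
      fix r assume r: "r \<in> gridB p (L + E)"
      then have rd: "dyadic p r" and r1: "- (L+E) \<le> r" and r2: "r \<le> L + E" and r3: "r \<noteq> L + E"
        unfolding gridB_def gridA_def by auto
      obtain a where a: "r = real_of_int a * h" using dy[OF rd] by blast
      have "real_of_int (-N) * h \<le> real_of_int a * h" using r1 a LE by simp
      then have "-N \<le> a" using hpos by (simp only: mult_le_cancel_right_pos of_int_le_iff)
      moreover have "real_of_int a * h \<le> real_of_int N * h" using r2 a LE by simp
      then have "a \<le> N" using hpos by (simp only: mult_le_cancel_right_pos of_int_le_iff)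
      moreover have "a \<noteq> N" using r3 a LE by auto
      ultimately show "r \<in> (\<lambda>k. real_of_int k * h) ` {-N..<N}" using a by auto
    qed
  next
    show "(\<lambda>k. real_of_int k * h) ` {-N..<N} \<subseteq> gridB p (L + E)"
    proof
      fix r assume "r \<in> (\<lambda>k. real_of_int k * h) ` {-N..<N}"
      then obtain k where k: "k \<in> {-N..<N}" "r = real_of_int k * h" by blast
      have "dyadic p r" unfolding dyadic_def using k(2) h_def by (auto simp: divide_inverse)
      moreover have "real_of_int (-N) * h \<le> real_of_int k * h" using k hpos
        by (intro mult_right_mono) auto
      moreover have "real_of_int k * h < real_of_int N * h" using k hpos by simp
      ultimately show "r \<in> gridB p (L + E)" unfolding gridB_def gridA_def using k LE by auto
    qed
  qed
  have inj: "inj_on (\<lambda>k. real_of_int k * h) {-N..<N}" using hpos by (auto simp: inj_on_def)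
  have w: "clap_weight p L \<sigma> x (real_of_int k * h) = c * h + I (k - m)" for k
  proof -
    have g: "exp (- min \<bar>r - x\<bar> L / \<sigma>) = c + phi L \<sigma> (r + (-x))" for r
      unfolding phi_def c_def by simp
    have cont: "continuous_on A (\<lambda>r. phi L \<sigma> (r + (-x)))" for A
      by (intro continuous_on_compose2[OF phi_cont] continuous_intros) auto
    have "clap_weight p L \<sigma> x (real_of_int k * h)
        = integral {real_of_int k * h .. real_of_int k * h + h} (\<lambda>r. c + phi L \<sigma> (r + (-x)))"
      unfolding clap_weight_def g h_def by simp
    also have "\<dots> = integral {real_of_int k * h .. real_of_int k * h + h} (\<lambda>r. c)
        + integral {real_of_int k * h .. real_of_int k * h + h} (\<lambda>r. phi L \<sigma> (r + (-x)))"
      by (rule integral_add) (intro integrable_continuous_interval cont continuous_on_const)+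
    also have "integral {real_of_int k * h .. real_of_int k * h + h} (\<lambda>r. c) = c * h"
      using hpos by simp
    also have "integral {real_of_int k * h .. real_of_int k * h + h} (\<lambda>r. phi L \<sigma> (r + (-x))) = I (k - m)"
    proof -
      have inst: "integral {real_of_int (k - m) * h - (-x) .. (real_of_int (k - m) * h + h) - (-x)}
          (\<lambda>r. phi L \<sigma> (r + (-x))) = I (k - m)"
        unfolding I_def by (rule integral_shift_real_ivl)
      have e1: "real_of_int (k - m) * h - (-x) = real_of_int k * h"
        and e2: "(real_of_int (k - m) * h + h) - (-x) = real_of_int k * h + h"
        using m by (simp_all add: algebra_simps)
      show ?thesis using inst unfolding e1 e2 .
    qed
    finally show ?thesis .
  qed
  have Irefl: "I (-1-j) = I j" for j unfolding I_def by (rule I_refl)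
  have Izero: "j \<ge> M \<or> j < -M \<Longrightarrow> I j = 0" for j unfolding I_def by (rule I_zero[OF hpos M])
  have AB: "-N-m \<le> -M" "M \<le> N-m" using mle mge unfolding N_def by auto
  have Mnn: "0 \<le> M" using Mpos by simp
  have ss: "(\<Sum>j\<in>{-N-m..<N-m}. I j) = 2 * (\<Sum>j\<in>{0..<M}. I j)"
     "(\<Sum>j\<in>{-N-m..<N-m}. real_of_int j * I j) = - (\<Sum>j\<in>{0..<M}. I j)"
    by (rule sym_sums[of I M "-N-m" "N-m"], rule Irefl, erule Izero, rule AB(1), rule AB(2), rule Mnn)+
  have Nnn: "N \<ge> 0" using Mpos aEpos N_def by simp
  have Z: "clap_norm p L E \<sigma> x = 2 * real_of_int N * c * h + 2 * S0"
  proof -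
    have "clap_norm p L E \<sigma> x = (\<Sum>k\<in>{-N..<N}. clap_weight p L \<sigma> x (real_of_int k * h))"
      unfolding clap_norm_def grid sum.reindex[OF inj] by simp
    also have "\<dots> = (\<Sum>k\<in>{-N..<N}. c * h) + (\<Sum>k\<in>{-N..<N}. I (k - m))"
      unfolding w by (rule sum.distrib)
    also have "(\<Sum>k\<in>{-N..<N}. c * h) = 2 * real_of_int N * c * h"
      using Nnn by simp
    also have "(\<Sum>k\<in>{-N..<N}. I (k - m)) = 2 * S0"
      unfolding shift_sum S0_def using ss(1) by (simp add: algebra_simps)
    finally show ?thesis .
  qed
  have Num: "(\<Sum>k\<in>{-N..<N}. real_of_int k * h * clap_weight p L \<sigma> x (real_of_int k * h))
      = - c * h * h * real_of_int N + h * (2 * real_of_int m - 1) * S0"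
  proof -
    have "(\<Sum>k\<in>{-N..<N}. real_of_int k * h * clap_weight p L \<sigma> x (real_of_int k * h))
       = c * h * h * (\<Sum>k\<in>{-N..<N}. real_of_int k) + h * (\<Sum>k\<in>{-N..<N}. real_of_int k * I (k - m))"
      unfolding w by (simp add: algebra_simps sum.distrib sum_distrib_left)
    also have "(\<Sum>k\<in>{-N..<N}. real_of_int k) = - real_of_int N"
      using sum_k[of "nat N"] Nnn by simp
    also have "(\<Sum>k\<in>{-N..<N}. real_of_int k * I (k - m))
        = (\<Sum>j\<in>{-N-m..<N-m}. real_of_int j * I j + real_of_int m * I j)"
    proof -
      have "(\<Sum>k\<in>{-N..<N}. real_of_int (k - m + m) * I (k - m))
          = (\<Sum>j\<in>{-N-m..<N-m}. real_of_int (j + m) * I j)"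
        by (rule shift_sum[where H="\<lambda>j. real_of_int (j + m) * I j"])
      then show ?thesis by (simp add: algebra_simps)
    qed
    also have "\<dots> = - S0 + real_of_int m * (2 * S0)"
      unfolding sum.distrib sum_distrib_left[symmetric] ss S0_def by simp
    finally show ?thesis by (simp add: algebra_simps)
  qed
  have cpos: "c > 0" "c < 1" unfolding c_def using Lpos spos by auto
  define Q where "Q = \<sigma> * (1 - c) + c * E"
  have Qpos: "Q > 0" unfolding Q_def using cpos spos Epos by (simp add: add_pos_pos)
  have Zv: "clap_norm p L E \<sigma> x = 2 * Q"
  proof -
    have key: "2 * real_of_int N * c * h = 2 * c * (L + E)" unfolding LE by (simp add: algebra_simps)
    show ?thesis unfolding Z S0 Q_def key by (simp add: algebra_simps)
  qed
  have "(\<Sum>y\<in>gridB p (L + E). y * clap_pmf p L E \<sigma> x y)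
      = (\<Sum>k\<in>{-N..<N}. real_of_int k * h * clap_weight p L \<sigma> x (real_of_int k * h)) / clap_norm p L E \<sigma> x"
    unfolding grid sum.reindex[OF inj] clap_pmf_def by (simp add: sum_divide_distrib)
  also have "\<dots> = (- c * h * (L + E) + (2 * x - h) * S0) / (2 * Q)"
    unfolding Num Zv using LE m by (simp add: algebra_simps)
  also have "\<dots> = x * ((\<sigma> * (1 - c) - c * L) / Q) - h / 2"
    using Qpos unfolding S0 Q_def by (simp add: field_simps)
  finally show ?thesis unfolding Q_def c_def h_def by simp
qed

end
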